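(* Let $n \ge 1$ and $r \ge 0$ be integers. (a) Let $\lambda$ be a partition with at most $n+1$ parts and $\lambda_1 \le r$. Then $(x_1 \cdots x_n)^r \, \mathrm{Symp}_{2n+1}(\lambda; x_1, \dots, x_n; z)$ is a polynomial in $x_1, \dots, x_n$, with coefficients depending on $z$. Moreover, $$\big[(x_1 \cdots x_n)^r \, \mathrm{Symp}_{2n+1}(\lambda; x_1, \dots, x_n; z)\big]\big|_{x_1=0} = \begin{cases} (x_2 \cdots x_n)^r \, \mathrm{Symp}_{2n-1}((\lambda_2, \dots, \lambda_{n+1}); x_2, \dots, x_n; z) & \text{if } \lambda_1 = r,\\ 0 & \text{otherwise.}\end{cases}$$ (b) Let $\lambda$ be a partition with at most $n$ parts and $\lambda_1 \le r$. Then $(x_1 \cdots x_n)^r \, \mathrm{Symp}_{2n}(\lambda; x_1, \dots, x_n)$ is a polynomial in $x_1, \dots, x_n$. Moreover, $$\big[(x_1 \cdots x_n)^r \, \mathrm{Symp}_{2n}(\lambda; x_1, \dots, x_n)\big]\big|_{x_1=0} = \begin{cases} (x_2 \cdots x_n)^r \, \mathrm{Symp}_{2(n-1)}((\lambda_2, \dots, \lambda_n); x_2, \dots, x_n) & \text{if } \lambda_1 = r,\\ 0 & \text{otherwise.}\end{cases}$$ Here $F|_{x_1=0}$ denotes the result of substituting $x_1 = 0$ in $F$.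
   Context: All partitions are padded with zeros as needed, so $\lambda = (\lambda_1 \ge \lambda_2 \ge \dots \ge \lambda_{n+1} \ge 0)$. The variables $x_1, \dots, x_n, z$ are indeterminates. For $m \ge 0$, a partition $\mu$ with at most $m+1$ parts, and variables $u_1, \dots, u_m, z$, let $A_\mu(u_1, \dots, u_m; z)$ be the $(m+1) \times (m+1)$ matrix with the following entries: - for $1 \le i \le m$ and $1 \le j \le m+1$, the $(i,j)$ entry is $$\big(u_i^{\mu_j+m+2-j} - u_i^{-(\mu_j+m+2-j)}\big) - z^{-1}\big(u_i^{\mu_j+m+1-j} - u_i^{-(\mu_j+m+1-j)}\big);$$ - for $1 \le j \le m+1$, the $(m+1,j)$ entry is $z^{\mu_j+m+1-j}$. The odd symplectic character $\mathrm{Symp}_{2m+1}(\mu; u_1, \dots, u_m; z)$ is given by the bialternant formula $$\mathrm{Symp}_{2m+1}(\mu; u_1, \dots, u_m; z) = \frac{\det A_\mu(u_1,\dots,u_m;z)}{\det A_\varnothing(u_1,\dots,u_m;z)},$$ where $\varnothing$ is the empty partition. For a partition $\mu$ with at most $m$ parts, $\mathrm{Symp}_{2m}(\mu; u_1, \dots, u_m)$ denotes the irreducible symplectic character: $$\mathrm{Symp}_{2m}(\mu; u_1, \dots, u_m) = \frac{\det\big(u_i^{\mu_j+m+1-j} - u_i^{-(\mu_j+m+1-j)}\big)_{1\le i,j\le m}}{\det\big(u_i^{m+1-j} - u_i^{-(m+1-j)}\big)_{1\le i,j\le m}}.$$ *)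

theory Defs
  imports Complex_Main "Jordan_Normal_Form.Determinant"
begin

text \<open>Conventions: variables u_1..u_m are represented by u 0, ..., u (m-1);
  partitions mu are functions nat => nat with mu_j = mu (j-1) (0-based).\<close>

definition is_partition :: "(nat \<Rightarrow> nat) \<Rightarrow> nat \<Rightarrow> bool" where
  "is_partition mu k \<longleftrightarrow> (\<forall>i j. i \<le> j \<longrightarrow> mu j \<le> mu i) \<and> (\<forall>i\<ge>k. mu i = 0)"

definition odd_symp_mat :: "nat \<Rightarrow> (nat \<Rightarrow> nat) \<Rightarrow> (nat \<Rightarrow> complex) \<Rightarrow> complex \<Rightarrow> complex mat" where
  "odd_symp_mat m mu u z = mat (m+1) (m+1) (\<lambda>(i,j).
     if i < m then
       (u i ^ (mu j + m + 1 - j) - inverse (u i) ^ (mu j + m + 1 - j))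
       - inverse z * (u i ^ (mu j + m - j) - inverse (u i) ^ (mu j + m - j))
     else z ^ (mu j + m - j))"

definition odd_symp_den :: "nat \<Rightarrow> (nat \<Rightarrow> complex) \<Rightarrow> complex \<Rightarrow> complex" where
  "odd_symp_den m u z = det (odd_symp_mat m (\<lambda>_. 0) u z)"

definition Symp_odd :: "nat \<Rightarrow> (nat \<Rightarrow> nat) \<Rightarrow> (nat \<Rightarrow> complex) \<Rightarrow> complex \<Rightarrow> complex" where
  "Symp_odd m mu u z = det (odd_symp_mat m mu u z) / odd_symp_den m u z"

definition even_symp_mat :: "nat \<Rightarrow> (nat \<Rightarrow> nat) \<Rightarrow> (nat \<Rightarrow> complex) \<Rightarrow> complex mat" where
  "even_symp_mat m mu u = mat m m (\<lambda>(i,j).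
     u i ^ (mu j + m - j) - inverse (u i) ^ (mu j + m - j))"

definition even_symp_den :: "nat \<Rightarrow> (nat \<Rightarrow> complex) \<Rightarrow> complex" where
  "even_symp_den m u = det (even_symp_mat m (\<lambda>_. 0) u)"

definition Symp_even :: "nat \<Rightarrow> (nat \<Rightarrow> nat) \<Rightarrow> (nat \<Rightarrow> complex) \<Rightarrow> complex" where
  "Symp_even m mu u = det (even_symp_mat m mu u) / even_symp_den m u"

text \<open>Polynomials in x_1..x_n (x 0 .. x (n-1)): finitely supported coefficient
  functions on exponent vectors supported in {0..<n}.\<close>
definition is_mpoly :: "nat \<Rightarrow> ((nat \<Rightarrow> nat) \<Rightarrow> complex) \<Rightarrow> bool" where
  "is_mpoly n c \<longleftrightarrow> finite {a. c a \<noteq> 0} \<and> (\<forall>a. c a \<noteq> 0 \<longrightarrow> (\<forall>i\<ge>n. a i = 0))"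

definition mpoly_eval :: "nat \<Rightarrow> ((nat \<Rightarrow> nat) \<Rightarrow> complex) \<Rightarrow> (nat \<Rightarrow> complex) \<Rightarrow> complex" where
  "mpoly_eval n c x = (\<Sum>a\<in>{a. c a \<noteq> 0}. c a * (\<Prod>i<n. x i ^ a i))"

end

theory Submission
  imports Defs
begin



lemma eval_superset:
  assumes "finite A" "{a. c a \<noteq> 0} \<subseteq> A"
  shows "mpoly_eval n c x = (\<Sum>a\<in>A. c a * (\<Prod>i<n. x i ^ a i))"
  unfolding mpoly_eval_def
  by (rule sum.mono_neutral_left) (use assms in auto)

definition pf :: "nat \<Rightarrow> ((nat\<Rightarrow>complex)\<Rightarrow>complex) \<Rightarrow> bool" where
  "pf n f \<longleftrightarrow> (\<exists>c. is_mpoly n c \<and> (\<forall>x. f x = mpoly_eval n c x))"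

lemma pf_const: "pf n (\<lambda>_. k)"
proof -
  define c where "c = (\<lambda>a::nat\<Rightarrow>nat. if a = (\<lambda>_. 0) then k else 0)"
  have sub: "{a. c a \<noteq> 0} \<subseteq> {\<lambda>_. 0}" by (auto simp: c_def split: if_splits)
  have "is_mpoly n c" unfolding is_mpoly_def using sub finite_subset by auto
  moreover have "mpoly_eval n c x = k" for x
    by (subst eval_superset[OF _ sub]) (auto simp: c_def)
  ultimately show ?thesis unfolding pf_def by metis
qed

lemma pf_var: assumes "i < n" shows "pf n (\<lambda>x. x i)"
proof -
  define e where "e = (\<lambda>j::nat. if j = i then 1 else (0::nat))"
  define c where "c = (\<lambda>a::nat\<Rightarrow>nat. if a = e then 1 else (0::complex))"
  have sub: "{a. c a \<noteq> 0} \<subseteq> {e}" by (auto simp: c_def split: if_splits)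
  have "is_mpoly n c" unfolding is_mpoly_def using sub finite_subset assms
    by (auto simp: c_def e_def split: if_splits)
  moreover have "mpoly_eval n c x = x i" for x
  proof -
    have "(\<Prod>l<n. x l ^ e l) = (\<Prod>l<n. if l = i then x l else 1)"
      by (rule prod.cong) (auto simp: e_def)
    also have "\<dots> = x i" using assms by (simp add: prod.delta)
    finally show ?thesis
      by (subst eval_superset[OF _ sub]) (auto simp: c_def)
  qed
  ultimately show ?thesis unfolding pf_def by metis
qed

lemma pf_add: assumes "pf n f" "pf n g" shows "pf n (\<lambda>x. f x + g x)"
proof -
  obtain c1 where c1: "is_mpoly n c1" "\<And>x. f x = mpoly_eval n c1 x" using assms(1) unfolding pf_def by auto
  obtain c2 where c2: "is_mpoly n c2" "\<And>x. g x = mpoly_eval n c2 x" using assms(2) unfolding pf_def by auto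
  define c where "c = (\<lambda>a. c1 a + c2 a)"
  let ?A = "{a. c1 a \<noteq> 0} \<union> {a. c2 a \<noteq> 0}"
  have fin: "finite ?A" using c1 c2 unfolding is_mpoly_def by auto
  have sub: "{a. c a \<noteq> 0} \<subseteq> ?A" by (auto simp: c_def)
  have "is_mpoly n c" unfolding is_mpoly_def using sub fin finite_subset c1(1) c2(1)
    unfolding is_mpoly_def c_def by (metis (mono_tags, lifting) add.right_neutral)
  moreover have "f x + g x = mpoly_eval n c x" for x
    unfolding c1(2) c2(2)
    by (subst (1 2 3) eval_superset[OF fin]) (auto simp: c_def algebra_simps sum.distrib)
  ultimately show ?thesis unfolding pf_def by metis
qed

lemma pf_mult: assumes "pf n f" "pf n g" shows "pf n (\<lambda>x. f x * g x)"
proof -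
  obtain c1 where c1: "is_mpoly n c1" "\<And>x. f x = mpoly_eval n c1 x" using assms(1) unfolding pf_def by auto
  obtain c2 where c2: "is_mpoly n c2" "\<And>x. g x = mpoly_eval n c2 x" using assms(2) unfolding pf_def by auto
  define A1 where "A1 = {a. c1 a \<noteq> 0}"
  define A2 where "A2 = {a. c2 a \<noteq> 0}"
  have f1: "finite A1" "finite A2" using c1(1) c2(1) by (simp_all add: is_mpoly_def A1_def A2_def)
  define pl where "pl = (\<lambda>p::(nat\<Rightarrow>nat)\<times>(nat\<Rightarrow>nat). (\<lambda>i. fst p i + snd p i))"
  define c where "c = (\<lambda>a. \<Sum>p\<in>{p\<in>A1\<times>A2. pl p = a}. c1 (fst p) * c2 (snd p))"
  let ?B = "pl ` (A1 \<times> A2)"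
  have finB: "finite ?B" using f1 by (intro finite_imageI finite_cartesian_product)
  have sub: "{a. c a \<noteq> 0} \<subseteq> ?B"
  proof
    fix a assume a: "a \<in> {a. c a \<noteq> 0}"
    show "a \<in> ?B"
    proof (rule ccontr)
      assume "a \<notin> ?B"
      then have "{p\<in>A1\<times>A2. pl p = a} = {}" by blast
      then have "c a = 0" unfolding c_def by (simp only: sum.empty)
      then show False using a by simp
    qed
  qed
  have "is_mpoly n c" unfolding is_mpoly_def
  proof (intro conjI allI impI)
    show "finite {a. c a \<noteq> 0}" using finite_subset[OF sub finB] .
    fix a i assume "c a \<noteq> 0" "n \<le> i"
    then obtain b d where bd: "b \<in> A1" "d \<in> A2" "a = pl (b,d)" using sub by blast
    have "b i = 0" using bd(1) c1(1) \<open>n \<le> i\<close> unfolding is_mpoly_def A1_def by blast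
    moreover have "d i = 0" using bd(2) c2(1) \<open>n \<le> i\<close> unfolding is_mpoly_def A2_def by blast
    ultimately show "a i = 0" using bd(3) by (simp add: pl_def)
  qed
  moreover have "f x * g x = mpoly_eval n c x" for x
  proof -
    let ?X = "\<lambda>a. (\<Prod>i<n. x i ^ a i)"
    have "mpoly_eval n c x = (\<Sum>a\<in>?B. c a * ?X a)" by (rule eval_superset[OF finB sub])
    also have "\<dots> = (\<Sum>a\<in>?B. \<Sum>p\<in>{p\<in>A1\<times>A2. pl p = a}. c1 (fst p) * c2 (snd p) * ?X (pl p))"
      unfolding c_def sum_distrib_right by (rule sum.cong) auto
    also have "\<dots> = (\<Sum>p\<in>A1\<times>A2. c1 (fst p) * c2 (snd p) * ?X (pl p))"
      by (rule sum.group) (use f1 in auto)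
    also have "\<dots> = (\<Sum>p\<in>A1\<times>A2. (c1 (fst p) * ?X (fst p)) * (c2 (snd p) * ?X (snd p)))"
      by (rule sum.cong) (auto simp: pl_def power_add prod.distrib)
    also have "\<dots> = (\<Sum>a\<in>A1. c1 a * ?X a) * (\<Sum>b\<in>A2. c2 b * ?X b)"
      by (simp add: sum_product sum.cartesian_product case_prod_beta)
    also have "\<dots> = f x * g x" unfolding c1(2) c2(2) mpoly_eval_def A1_def A2_def ..
    finally show ?thesis by simp
  qed
  ultimately show ?thesis unfolding pf_def by metis
qed

lemma pf_cong: "pf n f \<Longrightarrow> (\<And>x. f x = g x) \<Longrightarrow> pf n g"
  by (metis ext)

lemma pf_uminus: "pf n f \<Longrightarrow> pf n (\<lambda>x. - f x)"
  using pf_mult[OF pf_const[of n "-1"]] by simp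

lemma pf_diff: "pf n f \<Longrightarrow> pf n g \<Longrightarrow> pf n (\<lambda>x. f x - g x)"
  using pf_add[OF _ pf_uminus] by simp

lemma pf_sum: "finite A \<Longrightarrow> (\<And>a. a \<in> A \<Longrightarrow> pf n (f a)) \<Longrightarrow> pf n (\<lambda>x. \<Sum>a\<in>A. f a x)"
  by (induction A rule: finite_induct) (auto intro: pf_add pf_const)

lemma pf_prod: "finite A \<Longrightarrow> (\<And>a. a \<in> A \<Longrightarrow> pf n (f a)) \<Longrightarrow> pf n (\<lambda>x. \<Prod>a\<in>A. f a x)"
  by (induction A rule: finite_induct) (auto intro: pf_mult pf_const)

lemma pf_power: "pf n f \<Longrightarrow> pf n (\<lambda>x. f x ^ k)"
  by (induction k) (auto intro: pf_mult pf_const)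

lemma pf_eval: "is_mpoly n c \<Longrightarrow> pf n (mpoly_eval n c)"
  unfolding pf_def by auto

lemma pf_comp:
  assumes "pf n' f" "\<And>i. i < n' \<Longrightarrow> pf n (\<lambda>y. g y i)"
  shows "pf n (\<lambda>y. f (g y))"
proof -
  obtain c where c: "is_mpoly n' c" "\<And>x. f x = mpoly_eval n' c x" using assms(1) unfolding pf_def by auto
  have "pf n (\<lambda>y. \<Sum>a\<in>{a. c a \<noteq> 0}. c a * (\<Prod>i<n'. g y i ^ a i))"
    using c(1) unfolding is_mpoly_def
    by (intro pf_sum pf_mult pf_const pf_prod pf_power assms(2)) auto
  then show ?thesis by (rule pf_cong) (simp add: c(2) mpoly_eval_def)
qed




definition upoly :: "nat \<Rightarrow> ((nat\<Rightarrow>nat)\<Rightarrow>complex) \<Rightarrow> (nat\<Rightarrow>complex) \<Rightarrow> nat \<Rightarrow> complex poly" where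
  "upoly n c y i = (\<Sum>a\<in>{a. c a \<noteq> 0}. monom (c a * (\<Prod>l\<in>{..<n}-{i}. y l ^ a l)) (a i))"

lemma poly_upoly:
  assumes "i < n"
  shows "poly (upoly n c y i) t = mpoly_eval n c (y(i:=t))"
  unfolding upoly_def mpoly_eval_def poly_sum poly_monom
proof (rule sum.cong[OF refl])
  fix a
  have "(\<Prod>l<n. (y(i:=t)) l ^ a l) = (y(i:=t)) i ^ a i * (\<Prod>l\<in>{..<n}-{i}. (y(i:=t)) l ^ a l)"
    using assms by (subst prod.remove[of _ i]) auto
  also have "\<dots> = t ^ a i * (\<Prod>l\<in>{..<n}-{i}. y l ^ a l)"
    by (simp add: prod.cong[OF refl, of _ "\<lambda>l. (y(i:=t)) l ^ a l" "\<lambda>l. y l ^ a l"])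
  finally show "c a * (\<Prod>l\<in>{..<n} - {i}. y l ^ a l) * t ^ a i = c a * (\<Prod>l<n. (y(i := t)) l ^ a l)"
    by simp
qed

lemma coeff_upoly:
  assumes "is_mpoly n c"
  shows "coeff (upoly n c y i) k = (\<Sum>a\<in>{a. c a \<noteq> 0 \<and> a i = k}. c a * (\<Prod>l\<in>{..<n}-{i}. y l ^ a l))"
proof -
  have fin: "finite {a. c a \<noteq> 0}" using assms by (simp add: is_mpoly_def)
  have "coeff (upoly n c y i) k = (\<Sum>a\<in>{a. c a \<noteq> 0}. if a i = k then c a * (\<Prod>l\<in>{..<n}-{i}. y l ^ a l) else 0)"
    unfolding upoly_def coeff_sum coeff_monom by simp
  also have "\<dots> = (\<Sum>a\<in>{a\<in>{a. c a \<noteq> 0}. a i = k}. c a * (\<Prod>l\<in>{..<n}-{i}. y l ^ a l))"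
    by (rule sum.inter_filter[OF fin, symmetric])
  finally show ?thesis by simp
qed

lemma trunc_step:
  assumes c: "is_mpoly n c" and i: "i < n"
    and FVS: "\<And>y. F y = V y * mpoly_eval n c y"
    and hF: "\<And>y. \<exists>pF. (\<forall>t. F (y(i:=t)) = poly pF t) \<and> degree pF \<le> D"
    and hV: "\<And>y. \<exists>\<kappa> q. degree q = m \<and> (\<forall>t. V (y(i:=t)) = \<kappa> * poly q t)"
  shows "F y = V y * mpoly_eval n (\<lambda>a. if a i \<le> D - m then c a else 0) y"
proof -
  define c' where "c' = (\<lambda>a. if a i \<le> D - m then c a else 0)"
  have c': "is_mpoly n c'" using c unfolding is_mpoly_def c'_def
    by (auto elim: finite_subset[rotated])
  obtain pF where pF: "\<And>t. F (y(i:=t)) = poly pF t" "degree pF \<le> D" using hF by blast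
  obtain \<kappa> q where q: "degree q = m" "\<And>t. V (y(i:=t)) = \<kappa> * poly q t" using hV by blast
  define pS where "pS = upoly n c y i"
  define pS' where "pS' = upoly n c' y i"
  have yy: "y(i := y i) = y" by simp
  show ?thesis
  proof (cases "smult \<kappa> q = 0")
    case True
    then have "V y = 0" using q(2)[of "y i"] by (auto simp: yy)
    then show ?thesis using FVS[of y] by (simp add: c'_def)
  next
    case False
    have "poly pF t = poly (smult \<kappa> q * pS) t" for t
      using FVS[of "y(i:=t)"] pF(1)[of t] q(2)[of t] poly_upoly[OF i, of c y t] by (simp add: pS_def)
    then have eq: "pF = smult \<kappa> q * pS" using poly_eq_poly_eq_iff by blast
    have cz: "coeff pS k = 0" if "k > D - m" for k
    proof (cases "pS = 0")
      case True then show ?thesis by simp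
    next
      case nz: False
      have "degree pF = m + degree pS" using eq degree_mult_eq[OF False nz] False q(1)
        by (metis degree_smult_eq smult_eq_0_iff)
      then have "degree pS < k" using pF(2) that by linarith
      then show ?thesis by (simp add: coeff_eq_0)
    qed
    have "coeff pS' k = coeff pS k" for k
    proof -
      have "{a. c' a \<noteq> 0 \<and> a i = k} = (if k \<le> D - m then {a. c a \<noteq> 0 \<and> a i = k} else {})"
        by (auto simp: c'_def)
      then show ?thesis
        unfolding pS'_def pS_def coeff_upoly[OF c] coeff_upoly[OF c'] using cz[of k]
        by (auto simp: c'_def coeff_upoly[OF c] pS_def intro!: sum.cong)
    qed
    then have "pS' = pS" by (simp add: poly_eq_iff)
    then have "mpoly_eval n c' y = mpoly_eval n c y"
      using poly_upoly[OF i, of c' y "y i"] poly_upoly[OF i, of c y "y i"] by (simp add: pS_def pS'_def yy)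
    then show ?thesis using FVS[of y] by (simp add: c'_def)
  qed
qed

lemma trunc_all:
  assumes c: "is_mpoly n c"
    and FVS: "\<And>y. F y = V y * mpoly_eval n c y"
    and hF: "\<And>i y. i < n \<Longrightarrow> \<exists>pF. (\<forall>t. F (y(i:=t)) = poly pF t) \<and> degree pF \<le> D"
    and hV: "\<And>i y. i < n \<Longrightarrow> \<exists>\<kappa> q. degree q = m \<and> (\<forall>t. V (y(i:=t)) = \<kappa> * poly q t)"
  shows "\<exists>c'. is_mpoly n c' \<and> (\<forall>a. c' a \<noteq> 0 \<longrightarrow> (\<forall>i<n. a i \<le> D - m)) \<and> (\<forall>y. F y = V y * mpoly_eval n c' y)"
proof -
  have "\<exists>c'. is_mpoly n c' \<and> (\<forall>a. c' a \<noteq> 0 \<longrightarrow> (\<forall>i<j. a i \<le> D - m)) \<and> (\<forall>y. F y = V y * mpoly_eval n c' y)"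
    if "j \<le> n" for j
    using that
  proof (induction j)
    case 0 then show ?case using c FVS by auto
  next
    case (Suc j)
    then obtain c1 where c1: "is_mpoly n c1" "\<forall>a. c1 a \<noteq> 0 \<longrightarrow> (\<forall>i<j. a i \<le> D - m)"
      "\<forall>y. F y = V y * mpoly_eval n c1 y" by auto
    define c2 where "c2 = (\<lambda>a. if a j \<le> D - m then c1 a else 0)"
    have "is_mpoly n c2" using c1(1) unfolding is_mpoly_def c2_def
      by (auto elim: finite_subset[rotated])
    moreover have "\<forall>a. c2 a \<noteq> 0 \<longrightarrow> (\<forall>i<Suc j. a i \<le> D - m)"
      using c1(2) by (auto simp: c2_def less_Suc_eq split: if_splits)
    moreover have "\<forall>y. F y = V y * mpoly_eval n c2 y"
      unfolding c2_def using trunc_step[OF c1(1), of j F V D m] c1(3) hF hV Suc.prems by auto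
    ultimately show ?case by blast
  qed
  from this[of n] show ?thesis by simp
qed




fun hh :: "nat \<Rightarrow> nat \<Rightarrow> (nat \<Rightarrow> complex) \<Rightarrow> complex" where
  "hh 0 K y = 1"
| "hh (Suc d) 0 y = 0"
| "hh (Suc d) (Suc K) y = hh (Suc d) K y + y K * hh d (Suc K) y"

lemma hh_upd: "K \<le> j \<Longrightarrow> hh d K (y(j:=v)) = hh d K y"
  by (induction d K y rule: hh.induct) auto

lemma hh_1: "hh d (Suc 0) y = y 0 ^ d"
  by (induction d) auto

lemma hh_0: "hh d 0 y = (if d = 0 then 1 else 0)"
  by (cases d) auto

lemma pf_if: "pf n f \<Longrightarrow> pf n (\<lambda>x. if b then f x else 0)"
  by (cases b) (auto intro: pf_const)

lemma hh_pf: "K \<le> n \<Longrightarrow> pf n (hh d K)"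
proof (induction K arbitrary: d)
  case 0
  have "pf n (\<lambda>y. if d = 0 then 1 else 0)" by (rule pf_const)
  then show ?case by (simp add: hh_0)
next
  case (Suc K)
  note outer = Suc.IH
  have Kn: "Suc K \<le> n" by fact
  show ?case
  proof (induction d)
    case 0 then show ?case using pf_const[of n 1] by simp
  next
    case (Suc d)
    have "pf n (\<lambda>y. hh (Suc d) K y + y K * hh d (Suc K) y)"
      using Suc.IH outer Kn by (intro pf_add pf_mult pf_var) auto
    then show ?case by simp
  qed
qed

declare hh.simps(3)[simp del]

lemma hh_H:
  "hh (Suc d) (Suc K) (y(K:=t)) - hh (Suc d) (Suc K) y = (t - y K) * hh d (Suc (Suc K)) (y(Suc K:=t))"
proof (induction d)
  case 0
  have u: "hh (Suc 0) K (y(K:=t)) = hh (Suc 0) K y" by (rule hh_upd) simp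
  have "hh (Suc 0) (Suc K) (y(K:=t)) = hh (Suc 0) K (y(K:=t)) + (y(K:=t)) K * hh 0 (Suc K) (y(K:=t))"
    by (rule hh.simps(3))
  also have "\<dots> = hh (Suc 0) K y + t" by (simp only: u fun_upd_same hh.simps(1) mult_1_right)
  finally have X: "hh (Suc 0) (Suc K) (y(K:=t)) = hh (Suc 0) K y + t" .
  have Y: "hh (Suc 0) (Suc K) y = hh (Suc 0) K y + y K" by (simp add: hh.simps(3))
  show ?case by (simp only: X Y hh.simps(1)) simp
next
  case (Suc d)
  have e1: "hh (Suc (Suc d)) (Suc K) (y(K:=t)) = hh (Suc (Suc d)) K y + t * hh (Suc d) (Suc K) (y(K:=t))"
    by (simp add: hh_upd hh.simps(3))
  have e2: "hh (Suc (Suc d)) (Suc K) y = hh (Suc (Suc d)) K y + y K * hh (Suc d) (Suc K) y"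
    by (simp add: hh.simps(3))
  have e3: "hh (Suc d) (Suc (Suc K)) (y(Suc K:=t)) = hh (Suc d) (Suc K) y + t * hh d (Suc (Suc K)) (y(Suc K:=t))"
    by (simp add: hh_upd hh.simps(3))
  have A: "hh (Suc d) (Suc K) (y(K:=t)) = hh (Suc d) (Suc K) y + (t - y K) * hh d (Suc (Suc K)) (y(Suc K:=t))"
    using Suc.IH by (simp only: diff_eq_eq add.commute)
  show ?case unfolding e1 e2 e3 A by (simp add: algebra_simps)
qed

lemma newton_mono:
  "t ^ N = (\<Sum>k<K. if k \<le> N then (\<Prod>l<k. t - y l) * hh (N-k) (Suc k) y else 0)
     + (if K \<le> N then (\<Prod>l<K. t - y l) * hh (N-K) (Suc K) (y(K:=t)) else 0)"
proof (induction K)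
  case 0
  then show ?case by (simp add: hh_1)
next
  case (Suc K)
  have key: "(if K \<le> N then (\<Prod>l<K. t - y l) * hh (N-K) (Suc K) (y(K:=t)) else 0)
    = (if K \<le> N then (\<Prod>l<K. t - y l) * hh (N-K) (Suc K) y else 0)
      + (if Suc K \<le> N then (\<Prod>l<Suc K. t - y l) * hh (N - Suc K) (Suc (Suc K)) (y(Suc K:=t)) else 0)"
  proof (cases "K < N")
    case True
    then obtain d where d: "N - K = Suc d" "N - Suc K = d" by (metis Suc_diff_Suc)
    have "hh (Suc d) (Suc K) (y(K:=t)) = hh (Suc d) (Suc K) y + (t - y K) * hh d (Suc (Suc K)) (y(Suc K:=t))"
      using hh_H[of d K y t] by (simp add: algebra_simps)
    moreover have "(\<Prod>l<Suc K. t - y l) = (\<Prod>l<K. t - y l) * (t - y K)" by simp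
    ultimately show ?thesis using True d by (simp del: prod.lessThan_Suc add: ring_distribs mult.assoc)
  next
    case False
    then show ?thesis by auto
  qed
  show ?case using Suc key by simp
qed

lemma newton_mono_at:
  assumes "i < K"
  shows "y i ^ N = (\<Sum>k<K. if k \<le> N then (\<Prod>l<k. y i - y l) * hh (N-k) (Suc k) y else 0)"
proof -
  have "(\<Prod>l<K. y i - y l) = 0" using assms by (intro prod_zero) auto
  then show ?thesis using newton_mono[where t="y i" and N=N and K=K and y=y] by simp
qed

definition DD :: "complex poly \<Rightarrow> nat \<Rightarrow> (nat \<Rightarrow> complex) \<Rightarrow> complex" where
  "DD p k y = (\<Sum>N\<le>degree p. coeff p N * (if k \<le> N then hh (N-k) (Suc k) y else 0))"

lemma newton_poly:
  assumes "i < K"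
  shows "poly p (y i) = (\<Sum>k<K. (\<Prod>l<k. y i - y l) * DD p k y)"
proof -
  have "poly p (y i) = (\<Sum>N\<le>degree p. coeff p N * y i ^ N)" by (simp add: poly_altdef)
  also have "\<dots> = (\<Sum>N\<le>degree p. \<Sum>k<K. coeff p N * (if k \<le> N then (\<Prod>l<k. y i - y l) * hh (N-k) (Suc k) y else 0))"
    by (subst newton_mono_at[OF assms]) (simp add: sum_distrib_left)
  also have "\<dots> = (\<Sum>k<K. \<Sum>N\<le>degree p. coeff p N * (if k \<le> N then (\<Prod>l<k. y i - y l) * hh (N-k) (Suc k) y else 0))"
    by (rule sum.swap)
  also have "\<dots> = (\<Sum>k<K. (\<Prod>l<k. y i - y l) * DD p k y)"
    unfolding DD_def sum_distrib_left by (intro sum.cong refl) (auto simp: algebra_simps)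
  finally show ?thesis .
qed

lemma DD_high: "degree p < k \<Longrightarrow> DD p k y = 0"
  unfolding DD_def by (intro sum.neutral) auto

lemma DD_deg: "DD p (degree p) y = lead_coeff p"
proof -
  have "DD p (degree p) y = (\<Sum>N\<in>{degree p}. coeff p N * (if degree p \<le> N then hh (N - degree p) (Suc (degree p)) y else 0))"
    unfolding DD_def by (rule sum.mono_neutral_right) auto
  then show ?thesis by simp
qed

lemma DD_pf: "k < n \<Longrightarrow> pf n (DD p k)"
  unfolding DD_def
  by (intro pf_sum pf_mult pf_const pf_if hh_pf) auto




definition Bm :: "(nat \<Rightarrow> complex poly) \<Rightarrow> (nat \<Rightarrow> complex) \<Rightarrow> nat \<Rightarrow> complex mat" where
  "Bm p y M = mat M M (\<lambda>(i,j). poly (p j) (y i))"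
definition Tm :: "(nat \<Rightarrow> complex) \<Rightarrow> nat \<Rightarrow> complex mat" where
  "Tm y M = mat M M (\<lambda>(i,k). \<Prod>l<k. y i - y l)"
definition Em :: "(nat \<Rightarrow> complex poly) \<Rightarrow> (nat \<Rightarrow> complex) \<Rightarrow> nat \<Rightarrow> complex mat" where
  "Em p y M = mat M M (\<lambda>(k,j). DD (p j) k y)"
definition Jm :: "nat \<Rightarrow> complex mat" where
  "Jm M = mat M M (\<lambda>(l,j). if l + j = M - 1 then 1 else 0)"
definition Vd :: "nat \<Rightarrow> (nat \<Rightarrow> complex) \<Rightarrow> complex" where
  "Vd M y = (\<Prod>a<M. \<Prod>l<a. y a - y l)"

lemma Bm_carrier[simp]: "Bm p y M \<in> carrier_mat M M" by (simp add: Bm_def)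
lemma Tm_carrier[simp]: "Tm y M \<in> carrier_mat M M" by (simp add: Tm_def)
lemma Em_carrier[simp]: "Em p y M \<in> carrier_mat M M" by (simp add: Em_def)
lemma Jm_carrier[simp]: "Jm M \<in> carrier_mat M M" by (simp add: Jm_def)

lemma Bm_factor: "Bm p y M = Tm y M * Em p y M"
proof (rule eq_matI)
  fix i j assume ij: "i < dim_row (Tm y M * Em p y M)" "j < dim_col (Tm y M * Em p y M)"
  then have i: "i < M" and j: "j < M" by (auto simp: Tm_def Em_def)
  have "(Tm y M * Em p y M) $$ (i,j) = (\<Sum>k\<in>{0..<M}. (\<Prod>l<k. y i - y l) * DD (p j) k y)"
    using i j by (simp add: Tm_def Em_def scalar_prod_def)
  also have "\<dots> = poly (p j) (y i)" using newton_poly[OF i, of "p j" y] by (simp add: atLeast0LessThan)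
  finally show "Bm p y M $$ (i, j) = (Tm y M * Em p y M) $$ (i, j)" using i j by (simp add: Bm_def)
qed (auto simp: Bm_def Tm_def Em_def)

lemma det_Tm: "det (Tm y M) = Vd M y"
proof -
  have "det (Tm y M) = prod_list (diag_mat (Tm y M))"
    by (rule det_lower_triangular[of M]) (auto simp: Tm_def intro!: prod_zero)
  also have "\<dots> = (\<Prod>i\<in>{0..<M}. Tm y M $$ (i,i))"
    unfolding diag_mat_def using prod.distinct_set_conv_list[of "[0..<M]" "\<lambda>i. Tm y M $$ (i,i)"]
    by (simp add: Tm_def)
  also have "\<dots> = Vd M y" unfolding Vd_def by (simp add: Tm_def atLeast0LessThan)
  finally show ?thesis .
qed

lemma Jm_sq: "Jm M * Jm M = 1\<^sub>m M"
proof (rule eq_matI)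
  fix i j assume "i < dim_row (1\<^sub>m M)" "j < dim_col (1\<^sub>m M)"
  then have i: "i < M" and j: "j < M" by auto
  have "(Jm M * Jm M) $$ (i,j) = (\<Sum>l\<in>{0..<M}. (if i + l = M - 1 then 1 else 0) * (if l + j = M - 1 then 1 else 0))"
    using i j by (simp add: Jm_def scalar_prod_def)
  also have "\<dots> = (\<Sum>l\<in>{0..<M}. if l = M - 1 - i then (if i = j then 1 else 0) else (0::complex))"
    using i j by (intro sum.cong refl) auto
  also have "\<dots> = (if i = j then 1 else 0)" using i by (subst sum.delta) auto
  finally show "(Jm M * Jm M) $$ (i,j) = 1\<^sub>m M $$ (i,j)" using i j by simp
qed (auto simp: Jm_def)

lemma det_Jm_nz: "det (Jm M) \<noteq> 0"
proof -
  have "det (Jm M) * det (Jm M) = 1"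
    using det_mult[OF Jm_carrier Jm_carrier, of M] Jm_sq[of M] by simp
  then show ?thesis by auto
qed

lemma Bm_rev: "Bm p y M = Bm (\<lambda>j. p (M - 1 - j)) y M * Jm M"
proof (rule eq_matI)
  fix i j assume "i < dim_row (Bm (\<lambda>j. p (M - 1 - j)) y M * Jm M)" "j < dim_col (Bm (\<lambda>j. p (M - 1 - j)) y M * Jm M)"
  then have i: "i < M" and j: "j < M" by (auto simp: Bm_def Jm_def)
  have "(Bm (\<lambda>j. p (M - 1 - j)) y M * Jm M) $$ (i,j) = (\<Sum>l\<in>{0..<M}. poly (p (M - 1 - l)) (y i) * (if l + j = M - 1 then 1 else 0))"
    using i j by (simp add: Bm_def Jm_def scalar_prod_def)
  also have "\<dots> = (\<Sum>l\<in>{0..<M}. if l = M - 1 - j then poly (p j) (y i) else 0)"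
    using i j by (intro sum.cong refl) auto
  also have "\<dots> = poly (p j) (y i)" using j by (subst sum.delta) auto
  finally show "Bm p y M $$ (i,j) = (Bm (\<lambda>j. p (M - 1 - j)) y M * Jm M) $$ (i,j)" using i j by (simp add: Bm_def)
qed (auto simp: Bm_def Jm_def)

lemma det_Bm: "det (Bm p y M) = Vd M y * det (Jm M) * det (Em (\<lambda>j. p (M - 1 - j)) y M)"
proof -
  have "det (Bm p y M) = det (Bm (\<lambda>j. p (M - 1 - j)) y M) * det (Jm M)"
    by (subst Bm_rev) (rule det_mult[OF Bm_carrier Jm_carrier])
  also have "det (Bm (\<lambda>j. p (M - 1 - j)) y M) = Vd M y * det (Em (\<lambda>j. p (M - 1 - j)) y M)"
    by (subst Bm_factor) (simp add: det_mult[OF Tm_carrier Em_carrier] det_Tm)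
  finally show ?thesis by simp
qed

lemma Vd_cong: "(\<And>l. l < M \<Longrightarrow> y l = y' l) \<Longrightarrow> Vd M y = Vd M y'"
  unfolding Vd_def by (intro prod.cong refl) auto

lemma Bm_cong: "(\<And>l. l < M \<Longrightarrow> y l = y' l) \<Longrightarrow> Bm p y M = Bm p y' M"
  unfolding Bm_def by (intro eq_matI) auto

lemma Vd_poly:
  assumes "i < M"
  shows "\<exists>\<kappa> q. q \<noteq> 0 \<and> degree q = M - 1 \<and> (\<forall>t. Vd M (y(i:=t)) = \<kappa> * poly q t)"
  using assms
proof (induction M)
  case 0 then show ?case by simp
next
  case (Suc M)
  have VS: "Vd (Suc M) y' = Vd M y' * (\<Prod>l<M. y' M - y' l)" for y' by (simp add: Vd_def)
  show ?case
  proof (cases "i < M")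
    case True
    obtain \<kappa> q where q: "q \<noteq> 0" "degree q = M - 1" "\<And>t. Vd M (y(i:=t)) = \<kappa> * poly q t"
      using Suc.IH[OF True] by blast
    define \<kappa>2 where "\<kappa>2 = (\<Prod>l\<in>{..<M}-{i}. y M - y l)"
    have f: "(\<Prod>l<M. (y(i:=t)) M - (y(i:=t)) l) = \<kappa>2 * poly [:y M, -1:] t" for t
    proof -
      have "(\<Prod>l<M. (y(i:=t)) M - (y(i:=t)) l) = ((y(i:=t)) M - (y(i:=t)) i) * (\<Prod>l\<in>{..<M}-{i}. (y(i:=t)) M - (y(i:=t)) l)"
        using True by (subst prod.remove[of _ i]) auto
      also have "(\<Prod>l\<in>{..<M}-{i}. (y(i:=t)) M - (y(i:=t)) l) = \<kappa>2"
        unfolding \<kappa>2_def using True by (intro prod.cong refl) auto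
      finally show ?thesis using True by (simp add: algebra_simps)
    qed
    have lin: "[:y M, -1:] \<noteq> 0" "degree [:y M, -1:] = 1" by auto
    show ?thesis
    proof (intro exI conjI allI)
      show "q * [:y M, -1:] \<noteq> 0" using q(1) lin(1) by (rule no_zero_divisors)
      show "degree (q * [:y M, -1:]) = Suc M - 1" using degree_mult_eq[OF q(1) lin(1)] q(2) lin(2) True by simp
      fix t show "Vd (Suc M) (y(i:=t)) = (\<kappa> * \<kappa>2) * poly (q * [:y M, -1:]) t"
        unfolding VS q(3) f by (simp add: algebra_simps)
    qed
  next
    case False
    then have iM: "i = M" using Suc.prems by simp
    define q where "q = (\<Prod>l<M. [:- y l, 1:])"
    have qnz: "q \<noteq> 0" unfolding q_def by (subst prod_zero_iff) auto
    have dq: "degree q = M" unfolding q_def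
      by (subst degree_prod_eq_sum_degree) auto
    have A: "Vd M (y(i:=t)) = Vd M y" for t using iM by (intro Vd_cong) auto
    have B: "(\<Prod>l<M. (y(i:=t)) M - (y(i:=t)) l) = poly q t" for t
      unfolding q_def poly_prod using iM by (intro prod.cong refl) auto
    have VV: "Vd (Suc M) (y(i:=t)) = Vd M y * poly q t" for t
      unfolding VS A B ..
    show ?thesis using qnz dq VV unfolding fun_upd_def by auto
  qed
qed

lemma mat_delete_Bm_upd:
  assumes "i < M"
  shows "mat_delete (Bm p (y(i:=t)) M) i j = mat_delete (Bm p y M) i j"
  unfolding mat_delete_def Bm_def
  by (rule eq_matI) auto

lemma Bm_row_poly:
  assumes i: "i < M" and deg: "\<And>j. j < M \<Longrightarrow> degree (p j) \<le> D"
  shows "\<exists>pF. (\<forall>t. det (Bm p (y(i:=t)) M) = poly pF t) \<and> degree pF \<le> D"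
proof -
  define pF where "pF = (\<Sum>j<M. smult (cofactor (Bm p y M) i j) (p j))"
  have "det (Bm p (y(i:=t)) M) = poly pF t" for t
  proof -
    have "det (Bm p (y(i:=t)) M) = (\<Sum>j<M. Bm p (y(i:=t)) M $$ (i,j) * cofactor (Bm p (y(i:=t)) M) i j)"
      by (rule laplace_expansion_row[OF Bm_carrier i])
    also have "\<dots> = (\<Sum>j<M. poly (p j) t * cofactor (Bm p y M) i j)"
      using i by (intro sum.cong refl) (simp only: cofactor_def mat_delete_Bm_upd[OF i], simp add: Bm_def)
    also have "\<dots> = poly pF t" unfolding pF_def poly_sum by (simp add: algebra_simps)
    finally show ?thesis .
  qed
  moreover have "degree pF \<le> D" unfolding pF_def
    by (intro degree_sum_le) (auto intro: order.trans[OF degree_smult_le] deg)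
  ultimately show ?thesis by blast
qed

lemma pf_det:
  assumes "\<And>i j. i < M \<Longrightarrow> j < M \<Longrightarrow> pf n (e i j)"
  shows "pf n (\<lambda>y. det (mat M M (\<lambda>(i,j). e i j y)))"
proof -
  have pfs: "pf n (\<lambda>y. \<Sum>p\<in>{p. p permutes {0..<M}}. signof p * (\<Prod>i = 0..<M. e i (p i) y))"
    by (intro pf_sum pf_mult pf_const pf_prod) (auto simp: finite_permutations permutes_in_image intro: assms)
  have dex: "det (mat M M (\<lambda>(i,j). e i j y)) = (\<Sum>p\<in>{p. p permutes {0..<M}}. signof p * (\<Prod>i = 0..<M. e i (p i) y))" for y
    by (subst det_def'[where n=M]) (auto intro!: sum.cong prod.cong simp: permutes_in_image)
  from pfs show ?thesis by (rule pf_cong) (simp add: dex)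
qed

definition ext :: "nat \<Rightarrow> (nat \<Rightarrow> complex) \<Rightarrow> (nat \<Rightarrow> complex) \<Rightarrow> (nat \<Rightarrow> complex)" where
  "ext nv w y = (\<lambda>i. if i < nv then y i else w i)"

lemma ext_upd: "i < nv \<Longrightarrow> ext nv w (y(i:=t)) = (ext nv w y)(i:=t)"
  unfolding ext_def by auto

lemma pf_ext: "pf nv (\<lambda>y. ext nv w y i)"
  by (cases "i < nv") (simp_all add: ext_def pf_var pf_const)

lemma alternant_main:
  fixes p :: "nat \<Rightarrow> complex poly"
  assumes deg: "\<And>j. j < M \<Longrightarrow> degree (p j) \<le> D" and nv: "nv \<le> M"
  shows "\<exists>c. is_mpoly nv c \<and> (\<forall>a. c a \<noteq> 0 \<longrightarrow> (\<forall>i<nv. a i \<le> D - (M - 1))) \<and>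
     (\<forall>y. det (Bm p (ext nv w y) M) = Vd M (ext nv w y) * det (Jm M) * mpoly_eval nv c y)"
proof -
  define q where "q = (\<lambda>j. p (M - 1 - j))"
  have pfE: "pf M (\<lambda>y. det (Em q y M))"
    unfolding Em_def by (rule pf_det) (auto intro: DD_pf)
  have "pf nv (\<lambda>y. det (Em q (ext nv w y) M))"
    by (rule pf_comp[OF pfE]) (rule pf_ext)
  then obtain c0 where c0: "is_mpoly nv c0" "\<And>y. det (Em q (ext nv w y) M) = mpoly_eval nv c0 y"
    unfolding pf_def by blast
  define F where "F = (\<lambda>y. det (Bm p (ext nv w y) M))"
  define V where "V = (\<lambda>y. Vd M (ext nv w y) * det (Jm M))"
  have FVS: "F y = V y * mpoly_eval nv c0 y" for y
    unfolding F_def V_def det_Bm c0(2)[symmetric] q_def by simp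
  have hF: "\<exists>pF. (\<forall>t. F (y(i:=t)) = poly pF t) \<and> degree pF \<le> D" if "i < nv" for i y
    unfolding F_def ext_upd[OF that] using Bm_row_poly[of i M p D "ext nv w y"] that nv deg by auto
  have hV: "\<exists>\<kappa> q. degree q = M - 1 \<and> (\<forall>t. V (y(i:=t)) = \<kappa> * poly q t)" if "i < nv" for i y
  proof -
    have iM: "i < M" using that nv by simp
    obtain \<kappa> q where "degree q = M - 1" "\<And>t. Vd M ((ext nv w y)(i:=t)) = \<kappa> * poly q t"
      using Vd_poly[OF iM, of "ext nv w y"] by blast
    then show ?thesis unfolding V_def ext_upd[OF that]
      by (intro exI[of _ "\<kappa> * det (Jm M)"] exI[of _ q]) (simp add: algebra_simps)
  qed
  from trunc_all[OF c0(1) FVS hF hV] show ?thesis unfolding F_def V_def by (simp add: algebra_simps)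
qed




fun U :: "nat \<Rightarrow> complex poly" where
  "U 0 = 1"
| "U (Suc 0) = [:0,1:]"
| "U (Suc (Suc k)) = [:0,1:] * U (Suc k) - U k"

definition Um1 :: "nat \<Rightarrow> complex poly" where
  "Um1 k = (case k of 0 \<Rightarrow> 0 | Suc k' \<Rightarrow> U k')"

definition PP :: "complex \<Rightarrow> nat \<Rightarrow> complex poly" where
  "PP z k = U k - smult (inverse z) (Um1 k)"

lemma U_eval:
  assumes ab: "a * b = (1::complex)"
  shows "(a - b) * poly (U k) (a + b) = a ^ (k+1) - b ^ (k+1)"
proof (induction k rule: U.induct)
  case 1 then show ?case by simp
next
  case 2 then show ?case by (simp add: algebra_simps power2_eq_square)
next
  case (3 k)
  have h1: "b * a ^ Suc (Suc k) = a ^ Suc k" using ab by (simp add: algebra_simps)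
  have h2: "a * b ^ Suc (Suc k) = b ^ Suc k"
    using ab by (simp add: algebra_simps)
  have "(a - b) * poly (U (Suc (Suc k))) (a + b)
      = (a + b) * ((a - b) * poly (U (Suc k)) (a + b)) - (a - b) * poly (U k) (a + b)"
    by (simp add: algebra_simps)
  also have "\<dots> = (a + b) * (a ^ Suc (Suc k) - b ^ Suc (Suc k)) - (a ^ Suc k - b ^ Suc k)"
    using 3 by simp
  also have "\<dots> = a * a ^ Suc (Suc k) - b * b ^ Suc (Suc k) + (b * a ^ Suc (Suc k) - a * b ^ Suc (Suc k)) - (a ^ Suc k - b ^ Suc k)"
    by (simp add: algebra_simps)
  also have "\<dots> = a ^ (Suc (Suc k) + 1) - b ^ (Suc (Suc k) + 1)"
    unfolding h1 h2 by simp
  finally show ?case .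
qed

lemma Um1_eval:
  assumes ab: "a * b = (1::complex)"
  shows "(a - b) * poly (Um1 k) (a + b) = a ^ k - b ^ k"
  using U_eval[OF ab, of "k - 1"] by (cases k) (auto simp: Um1_def)

lemma PP_eval:
  assumes ab: "a * b = (1::complex)"
  shows "(a - b) * poly (PP z k) (a + b) = (a ^ (k+1) - b ^ (k+1)) - inverse z * (a ^ k - b ^ k)"
proof -
  have "(a - b) * poly (PP z k) (a + b) = (a - b) * poly (U k) (a + b) - inverse z * ((a - b) * poly (Um1 k) (a + b))"
    by (simp add: PP_def algebra_simps)
  then show ?thesis using U_eval[OF ab, of k] Um1_eval[OF ab, of k] by simp
qed

lemma U_w:
  assumes z: "z \<noteq> 0"
  shows "poly (U k) (z + inverse z) = z ^ k + inverse z * poly (Um1 k) (z + inverse z)"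
proof (induction k rule: U.induct)
  case 1 then show ?case by (simp add: Um1_def)
next
  case 2 then show ?case by (simp add: Um1_def)
next
  case (3 k)
  have zz: "z * inverse z = 1" using z by simp
  define w where "w = z + inverse z"
  define u where "u = poly (U k) w"
  define u1 where "u1 = poly (U (Suc k)) w"
  have IH: "u1 = z ^ Suc k + inverse z * u" using 3(1) by (simp add: Um1_def u_def u1_def w_def)
  have "z * u1 = z * z ^ Suc k + (z * inverse z) * u" unfolding IH by (simp add: algebra_simps)
  then have zu: "z * u1 = z ^ Suc (Suc k) + u" using zz by simp
  have "poly (U (Suc (Suc k))) w = (z + inverse z) * u1 - u" by (simp add: u_def u1_def w_def)
  also have "\<dots> = z * u1 + inverse z * u1 - u" by (simp add: algebra_simps)
  also have "\<dots> = z ^ Suc (Suc k) + inverse z * u1" unfolding zu by simp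
  finally show ?case by (simp add: Um1_def u1_def w_def)
qed

lemma PP_w: "z \<noteq> 0 \<Longrightarrow> poly (PP z k) (z + inverse z) = z ^ k"
  using U_w[of z k] by (simp add: PP_def)

lemma U_deg: "degree (U k) \<le> k \<and> coeff (U k) k = 1"
proof (induction k rule: U.induct)
  case 1 then show ?case by simp
next
  case 2 then show ?case by simp
next
  case (3 k)
  have d1: "degree ([:0,1:] * U (Suc k)) \<le> Suc (Suc k)"
    using degree_mult_le[of "[:0,1:]" "U (Suc k)"] 3 by simp
  have "degree (U (Suc (Suc k))) \<le> Suc (Suc k)"
    using degree_diff_le[OF d1, of "U k"] 3 by simp
  moreover have "coeff (U (Suc (Suc k))) (Suc (Suc k)) = 1"
    using 3 by (simp add: coeff_eq_0)
  ultimately show ?case by simp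
qed

lemma U_degree: "degree (U k) = k" and U_lead: "lead_coeff (U k) = 1"
proof -
  have "k \<le> degree (U k)" using U_deg[of k] by (intro le_degree) simp
  then show "degree (U k) = k" using U_deg[of k] by simp
  then show "lead_coeff (U k) = 1" using U_deg[of k] by simp
qed

lemma Um1_degree: "degree (Um1 k) \<le> k - 1"
  by (cases k) (auto simp: Um1_def U_degree)

lemma Um1_Suc: "Um1 (Suc k) = U k" by (simp add: Um1_def)

lemma PP_degree: "degree (PP z k) = k" and PP_lead: "lead_coeff (PP z k) = 1"
proof -
  have c: "coeff (PP z k) k = 1"
  proof (cases k)
    case 0 then show ?thesis by (simp add: PP_def Um1_def)
  next
    case (Suc k')
    then have "coeff (Um1 k) k = 0" using Um1_degree[of k] by (intro coeff_eq_0) simp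
    then show ?thesis using U_deg[of k] by (simp add: PP_def)
  qed
  have "degree (PP z k) \<le> k"
    unfolding PP_def using U_degree[of k] Um1_degree[of k]
    by (intro degree_diff_le) (auto intro: order.trans[OF degree_smult_le])
  moreover have "k \<le> degree (PP z k)" using c by (intro le_degree) simp
  ultimately show "degree (PP z k) = k" by simp
  then show "lead_coeff (PP z k) = 1" using c by simp
qed




lemma PP_coeff[simp]: "coeff (PP z k) k = 1"
  using PP_lead[of z k] PP_degree[of z k] by simp

lemma U_coeff[simp]: "coeff (U k) k = 1"
  using U_deg[of k] by simp

lemma det_rowscale:
  assumes B: "B \<in> carrier_mat M M"
  shows "det (mat M M (\<lambda>(i,j). s i * B $$ (i,j))) = (\<Prod>i<M. s i) * det B"
proof -
  let ?P = "{p. p permutes {0..<M}}"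
  have "det (mat M M (\<lambda>(i,j). s i * B $$ (i,j))) = (\<Sum>p\<in>?P. signof p * (\<Prod>i=0..<M. s i * B $$ (i, p i)))"
    by (subst det_def'[where n=M]) (auto intro!: sum.cong prod.cong simp: permutes_in_image)
  also have "\<dots> = (\<Prod>i<M. s i) * (\<Sum>p\<in>?P. signof p * (\<Prod>i=0..<M. B $$ (i, p i)))"
    by (simp add: prod.distrib sum_distrib_left algebra_simps atLeast0LessThan)
  also have "\<dots> = (\<Prod>i<M. s i) * det B" using det_def'[OF B] by simp
  finally show ?thesis .
qed

lemma det_Em_unit:
  assumes "\<And>j. j < M \<Longrightarrow> degree (q j) = j \<and> lead_coeff (q j) = 1"
  shows "det (Em q y M) = 1"
proof -
  have "det (Em q y M) = prod_list (diag_mat (Em q y M))"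
    by (rule det_upper_triangular[of _ M]) (auto simp: upper_triangular_def Em_def assms intro!: DD_high)
  also have "\<dots> = (\<Prod>i\<in>{0..<M}. Em q y M $$ (i,i))"
    unfolding diag_mat_def using prod.distinct_set_conv_list[of "[0..<M]" "\<lambda>i. Em q y M $$ (i,i)"]
    by (simp add: Em_def)
  also have "\<dots> = 1"
  proof (rule prod.neutral, rule ballI)
    fix i assume i: "i \<in> {0..<M}"
    then have "Em q y M $$ (i,i) = DD (q i) (degree (q i)) y" using assms[of i] by (simp add: Em_def)
    also have "\<dots> = lead_coeff (q i)" by (rule DD_deg)
    also have "\<dots> = 1" using conjunct2[OF assms[of i]] i by simp
    finally show "Em q y M $$ (i,i) = 1" .
  qed
  finally show ?thesis .
qed

definition yv :: "(nat \<Rightarrow> complex) \<Rightarrow> nat \<Rightarrow> complex" where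
  "yv x = (\<lambda>i. x i + inverse (x i))"
definition sv :: "nat \<Rightarrow> (nat \<Rightarrow> complex) \<Rightarrow> nat \<Rightarrow> complex" where
  "sv n x = (\<lambda>i. if i < n then x i - inverse (x i) else 1)"

lemma final_poly:
  assumes c: "is_mpoly n c" and bd: "\<forall>a. c a \<noteq> 0 \<longrightarrow> (\<forall>i<n. a i \<le> r)"
  shows "\<exists>cf. is_mpoly n cf \<and> (\<forall>x. (\<forall>i<n. x i \<noteq> 0) \<longrightarrow> (\<Prod>i<n. x i)^r * mpoly_eval n c (yv x) = mpoly_eval n cf x)"
proof -
  have "pf n (\<lambda>x. \<Sum>a\<in>{a. c a \<noteq> 0}. c a * (\<Prod>i<n. x i ^ (r - a i) * (x i ^ 2 + 1) ^ a i))"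
    using c unfolding is_mpoly_def
    by (intro pf_sum pf_mult pf_const pf_prod pf_power pf_add pf_var) auto
  then obtain cf where cf: "is_mpoly n cf" "\<And>x. (\<Sum>a\<in>{a. c a \<noteq> 0}. c a * (\<Prod>i<n. x i ^ (r - a i) * (x i ^ 2 + 1) ^ a i)) = mpoly_eval n cf x"
    unfolding pf_def by blast
  have "(\<Prod>i<n. x i)^r * mpoly_eval n c (yv x) = mpoly_eval n cf x" if x: "\<forall>i<n. x i \<noteq> 0" for x
  proof -
    have "(\<Prod>i<n. x i)^r * mpoly_eval n c (yv x) = (\<Sum>a\<in>{a. c a \<noteq> 0}. c a * (\<Prod>i<n. x i ^ r * yv x i ^ a i))"
      unfolding mpoly_eval_def sum_distrib_left
      by (intro sum.cong refl) (simp add: prod.distrib prod_power_distrib algebra_simps)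
    also have "\<dots> = (\<Sum>a\<in>{a. c a \<noteq> 0}. c a * (\<Prod>i<n. x i ^ (r - a i) * (x i ^ 2 + 1) ^ a i))"
    proof -
      have per: "x i ^ r * yv x i ^ a i = x i ^ (r - a i) * (x i ^ 2 + 1) ^ a i"
        if a: "a \<in> {a. c a \<noteq> 0}" and i: "i < n" for a i
      proof -
        have ar: "a i \<le> r" using bd a i by auto
        have xi: "x i \<noteq> 0" using x i by auto
        have "x i ^ r = x i ^ (r - a i) * x i ^ a i" using ar by (simp add: power_add[symmetric])
        moreover have "x i ^ a i * yv x i ^ a i = (x i ^ 2 + 1) ^ a i"
          using xi by (simp add: yv_def power_mult_distrib[symmetric] algebra_simps power2_eq_square)
        ultimately show ?thesis by (simp add: mult.assoc)
      qed
      have "(\<Prod>i<n. x i ^ r * yv x i ^ a i) = (\<Prod>i<n. x i ^ (r - a i) * (x i ^ 2 + 1) ^ a i)"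
        if "a \<in> {a. c a \<noteq> 0}" for a
        by (rule prod.cong[OF refl]) (use per[OF that] in simp)
      then show ?thesis by (intro sum.cong refl) simp
    qed
    also have "\<dots> = mpoly_eval n cf x" by (rule cf(2))
    finally show ?thesis .
  qed
  then show ?thesis using cf(1) by blast
qed

lemma odd_mat_eq:
  assumes x: "\<forall>i<n. x i \<noteq> 0" and z: "z \<noteq> 0"
  shows "odd_symp_mat n \<mu> x z = mat (n+1) (n+1) (\<lambda>(i,j). sv n x i *
     Bm (\<lambda>j. PP z (\<mu> j + n - j)) (ext n (\<lambda>_. z + inverse z) (yv x)) (n+1) $$ (i,j))"
proof (rule eq_matI)
  fix i j assume "i < dim_row (mat (n+1) (n+1) (\<lambda>(i,j). sv n x i *
     Bm (\<lambda>j. PP z (\<mu> j + n - j)) (ext n (\<lambda>_. z + inverse z) (yv x)) (n+1) $$ (i,j)))"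
    "j < dim_col (mat (n+1) (n+1) (\<lambda>(i,j). sv n x i *
     Bm (\<lambda>j. PP z (\<mu> j + n - j)) (ext n (\<lambda>_. z + inverse z) (yv x)) (n+1) $$ (i,j)))"
  then have i: "i < n+1" and j: "j < n+1" by auto
  define e where "e = \<mu> j + n - j"
  have e1: "Suc (\<mu> j + n) - j = Suc e" using j by (simp add: e_def)
  show "odd_symp_mat n \<mu> x z $$ (i,j) = mat (n+1) (n+1) (\<lambda>(i,j). sv n x i *
     Bm (\<lambda>j. PP z (\<mu> j + n - j)) (ext n (\<lambda>_. z + inverse z) (yv x)) (n+1) $$ (i,j)) $$ (i,j)"
  proof (cases "i < n")
    case True
    have ab: "x i * inverse (x i) = 1" using x True by simp
    show ?thesis using i j True PP_eval[OF ab, of z e]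
      by (simp add: odd_symp_mat_def Bm_def ext_def yv_def sv_def e1 e_def[symmetric])
  next
    case False
    then have "i = n" using i by simp
    then show ?thesis using i j PP_w[OF z, of e]
      by (simp add: odd_symp_mat_def Bm_def ext_def yv_def sv_def e_def[symmetric])
  qed
qed (auto simp: odd_symp_mat_def)

lemma even_mat_eq:
  assumes x: "\<forall>i<n. x i \<noteq> 0"
  shows "even_symp_mat n \<mu> x = mat n n (\<lambda>(i,j). sv n x i *
     Bm (\<lambda>j. Um1 (\<mu> j + n - j)) (ext n w (yv x)) n $$ (i,j))"
proof (rule eq_matI)
  fix i j assume "i < dim_row (mat n n (\<lambda>(i,j). sv n x i *
     Bm (\<lambda>j. Um1 (\<mu> j + n - j)) (ext n w (yv x)) n $$ (i,j)))"
    "j < dim_col (mat n n (\<lambda>(i,j). sv n x i *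
     Bm (\<lambda>j. Um1 (\<mu> j + n - j)) (ext n w (yv x)) n $$ (i,j)))"
  then have i: "i < n" and j: "j < n" by auto
  have ab: "x i * inverse (x i) = 1" using x i by simp
  show "even_symp_mat n \<mu> x $$ (i,j) = mat n n (\<lambda>(i,j). sv n x i *
     Bm (\<lambda>j. Um1 (\<mu> j + n - j)) (ext n w (yv x)) n $$ (i,j)) $$ (i,j)"
    using i j Um1_eval[OF ab, of "\<mu> j + n - j"]
    by (simp add: even_symp_mat_def Bm_def ext_def yv_def sv_def)
qed (auto simp: even_symp_mat_def)

lemma odd_poly:
  assumes lam: "\<And>j. lam j \<le> lam 0" and r: "lam 0 \<le> r" and z: "z \<noteq> 0"
  shows "\<exists>c. is_mpoly n c \<and> (\<forall>x. (\<forall>i<n. x i \<noteq> 0) \<and> odd_symp_den n x z \<noteq> 0 \<longrightarrow>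
            (\<Prod>i<n. x i) ^ r * Symp_odd n lam x z = mpoly_eval n c x)"
proof -
  define w where "w = (\<lambda>_::nat. z + inverse z)"
  define p where "p = (\<lambda>j. PP z (lam j + n - j))"
  have deg: "degree (p j) \<le> lam 0 + n" if "j < n+1" for j
    using lam[of j] by (simp add: p_def PP_degree)
  obtain c where c: "is_mpoly n c" "\<forall>a. c a \<noteq> 0 \<longrightarrow> (\<forall>i<n. a i \<le> lam 0 + n - (n + 1 - 1))"
    "\<forall>y. det (Bm p (ext n w y) (n+1)) = Vd (n+1) (ext n w y) * det (Jm (n+1)) * mpoly_eval n c y"
    using alternant_main[of "n+1" p "lam 0 + n" n w] deg by auto
  have c2: "\<forall>a. c a \<noteq> 0 \<longrightarrow> (\<forall>i<n. a i \<le> r)" using c(2) r by fastforce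
  obtain cf where cf: "is_mpoly n cf" "\<forall>x. (\<forall>i<n. x i \<noteq> 0) \<longrightarrow> (\<Prod>i<n. x i)^r * mpoly_eval n c (yv x) = mpoly_eval n cf x"
    using final_poly[OF c(1) c2] by blast
  have "(\<Prod>i<n. x i) ^ r * Symp_odd n lam x z = mpoly_eval n cf x"
    if x: "\<forall>i<n. x i \<noteq> 0" and den: "odd_symp_den n x z \<noteq> 0" for x
  proof -
    define Y where "Y = ext n w (yv x)"
    define S where "S = (\<Prod>i<n+1. sv n x i)"
    have dl: "det (odd_symp_mat n lam x z) = S * (Vd (n+1) Y * det (Jm (n+1)) * mpoly_eval n c (yv x))"
      unfolding odd_mat_eq[OF x z, of lam] det_rowscale[OF Bm_carrier] S_def Y_def
      using c(3) by (simp add: p_def w_def)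
    have "det (Em (\<lambda>j. PP z (0 + n - (n + 1 - 1 - j))) Y (n+1)) = 1"
      by (rule det_Em_unit) (auto simp: PP_degree PP_lead)
    then have d0: "odd_symp_den n x z = S * (Vd (n+1) Y * det (Jm (n+1)))"
      unfolding odd_symp_den_def odd_mat_eq[OF x z, of "\<lambda>_. 0"] det_rowscale[OF Bm_carrier] S_def Y_def det_Bm
      by (simp add: w_def)
    have dn: "S * (Vd (n+1) Y * det (Jm (n+1))) \<noteq> 0" using den d0 by simp
    have "Symp_odd n lam x z = (S * (Vd (n+1) Y * det (Jm (n+1)))) * mpoly_eval n c (yv x) / (S * (Vd (n+1) Y * det (Jm (n+1))))"
      unfolding Symp_odd_def dl d0 by (simp only: mult.assoc)
    also have "\<dots> = mpoly_eval n c (yv x)" using dn by simp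
    finally have "Symp_odd n lam x z = mpoly_eval n c (yv x)" .
    then show ?thesis using cf(2) x by simp
  qed
  then show ?thesis using cf(1) by blast
qed

lemma even_poly:
  assumes n: "n \<ge> 1" and lam: "\<And>j. lam j \<le> lam 0" and r: "lam 0 \<le> r"
  shows "\<exists>c. is_mpoly n c \<and> (\<forall>x. (\<forall>i<n. x i \<noteq> 0) \<and> even_symp_den n x \<noteq> 0 \<longrightarrow>
            (\<Prod>i<n. x i) ^ r * Symp_even n lam x = mpoly_eval n c x)"
proof -
  define w where "w = (\<lambda>_::nat. 0::complex)"
  define p where "p = (\<lambda>j. Um1 (lam j + n - j))"
  have deg: "degree (p j) \<le> lam 0 + n - 1" if "j < n" for j
    using lam[of j] Um1_degree[of "lam j + n - j"] by (simp add: p_def)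
  obtain c where c: "is_mpoly n c" "\<forall>a. c a \<noteq> 0 \<longrightarrow> (\<forall>i<n. a i \<le> lam 0 + n - 1 - (n - 1))"
    "\<forall>y. det (Bm p (ext n w y) n) = Vd n (ext n w y) * det (Jm n) * mpoly_eval n c y"
    using alternant_main[of n p "lam 0 + n - 1" n w] deg by auto
  have c2: "\<forall>a. c a \<noteq> 0 \<longrightarrow> (\<forall>i<n. a i \<le> r)" using c(2) r n by fastforce
  obtain cf where cf: "is_mpoly n cf" "\<forall>x. (\<forall>i<n. x i \<noteq> 0) \<longrightarrow> (\<Prod>i<n. x i)^r * mpoly_eval n c (yv x) = mpoly_eval n cf x"
    using final_poly[OF c(1) c2] by blast
  have "(\<Prod>i<n. x i) ^ r * Symp_even n lam x = mpoly_eval n cf x"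
    if x: "\<forall>i<n. x i \<noteq> 0" and den: "even_symp_den n x \<noteq> 0" for x
  proof -
    define Y where "Y = ext n w (yv x)"
    define S where "S = (\<Prod>i<n. sv n x i)"
    have dl: "det (even_symp_mat n lam x) = S * (Vd n Y * det (Jm n) * mpoly_eval n c (yv x))"
      unfolding even_mat_eq[OF x, of lam w] det_rowscale[OF Bm_carrier] S_def Y_def
      using c(3) by (simp add: p_def)
    have "det (Em (\<lambda>j. Um1 (0 + n - (n - 1 - j))) Y n) = 1"
    proof (rule det_Em_unit)
      fix j assume "j < n"
      then have "0 + n - (n - 1 - j) = Suc j" by simp
      then show "degree (Um1 (0 + n - (n - 1 - j))) = j \<and> lead_coeff (Um1 (0 + n - (n - 1 - j))) = 1"
        by (simp add: Um1_Suc U_degree U_lead)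
    qed
    then have d0: "even_symp_den n x = S * (Vd n Y * det (Jm n))"
      unfolding even_symp_den_def even_mat_eq[OF x, of "\<lambda>_. 0" w] det_rowscale[OF Bm_carrier] S_def Y_def det_Bm
      by simp
    have dn: "S * (Vd n Y * det (Jm n)) \<noteq> 0" using den d0 by simp
    have "Symp_even n lam x = (S * (Vd n Y * det (Jm n))) * mpoly_eval n c (yv x) / (S * (Vd n Y * det (Jm n)))"
      unfolding Symp_even_def dl d0 by (simp only: mult.assoc)
    also have "\<dots> = mpoly_eval n c (yv x)" using dn by simp
    finally have "Symp_even n lam x = mpoly_eval n c (yv x)" .
    then show ?thesis using cf(2) x by simp
  qed
  then show ?thesis using cf(1) by blast
qed




lemma pow_inv:
  fixes t :: complex
  assumes "t \<noteq> 0" "e \<le> K"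
  shows "t ^ K * inverse t ^ e = t ^ (K - e)"
proof -
  have "t ^ K = t ^ (K - e) * t ^ e" using assms(2) by (simp add: power_add[symmetric])
  moreover have "t ^ e * inverse t ^ e = 1" using assms(1)
    by (simp add: power_mult_distrib[symmetric])
  ultimately show ?thesis by (simp add: mult.assoc)
qed

lemma ev_nz: "eventually (\<lambda>t::complex. t \<noteq> 0) (at 0)"
  unfolding eventually_at_filter by (rule always_eventually) auto

lemma row0_limit:
  fixes A :: "complex \<Rightarrow> complex mat"
  assumes car: "\<And>t. A t \<in> carrier_mat M M" and M: "0 < M"
    and gA: "\<And>t j. t \<noteq> 0 \<Longrightarrow> j < M \<Longrightarrow> t ^ K * A t $$ (0,j) = g j t"
    and gc: "\<And>j. j < M \<Longrightarrow> isCont (g j) 0"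
    and g0: "\<And>j. j < M \<Longrightarrow> g j 0 = (if j = 0 then -1 else 0)"
    and dl: "\<And>t j. mat_delete (A t) 0 j = mat_delete (A 1) 0 j"
  shows "((\<lambda>t. t ^ K * det (A t)) \<longlongrightarrow> - det (mat_delete (A 1) 0 0)) (at 0)"
proof -
  define cof where "cof = (\<lambda>j. cofactor (A 1) 0 j)"
  have eq: "t ^ K * det (A t) = (\<Sum>j<M. g j t * cof j)" if t: "t \<noteq> 0" for t
  proof -
    have "det (A t) = (\<Sum>j<M. A t $$ (0,j) * cofactor (A t) 0 j)"
      by (rule laplace_expansion_row[OF car M])
    then have "t ^ K * det (A t) = (\<Sum>j<M. (t ^ K * A t $$ (0,j)) * cofactor (A t) 0 j)"
      by (simp add: sum_distrib_left mult.assoc)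
    also have "\<dots> = (\<Sum>j<M. g j t * cof j)"
    proof (intro sum.cong refl)
      fix j assume "j \<in> {..<M}"
      then have j: "j < M" by simp
      have "cofactor (A t) 0 j = cof j" unfolding cof_def cofactor_def by (simp only: dl[of t j])
      then show "t ^ K * A t $$ (0, j) * cofactor (A t) 0 j = g j t * cof j" using gA[OF t j] by simp
    qed
    finally show ?thesis .
  qed
  have "((\<lambda>t. g j t * cof j) \<longlongrightarrow> g j 0 * cof j) (at 0)" if "j < M" for j
    using gc[OF that] unfolding isCont_def by (rule tendsto_mult_right)
  then have lim: "((\<lambda>t. \<Sum>j<M. g j t * cof j) \<longlongrightarrow> (\<Sum>j<M. g j 0 * cof j)) (at 0)"
    by (intro tendsto_sum) auto
  have "(\<Sum>j<M. g j 0 * cof j) = (\<Sum>j<M. if j = 0 then - cof j else 0)"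
    by (intro sum.cong refl) (simp add: g0)
  also have "\<dots> = - det (mat_delete (A 1) 0 0)" using M by (simp add: cof_def cofactor_def)
  finally have val: "(\<Sum>j<M. g j 0 * cof j) = - det (mat_delete (A 1) 0 0)" .
  have ev: "eventually (\<lambda>t. (\<Sum>j<M. g j t * cof j) = t ^ K * det (A t)) (at 0)"
    using ev_nz by eventually_elim (simp add: eq)
  show ?thesis using tendsto_cong[OF ev, THEN iffD1, OF lim] unfolding val .
qed

lemma limit_core:
  fixes Phi Nn Dd :: "complex \<Rightarrow> complex"
  assumes Pc: "isCont Phi 0" and N: "(Nn \<longlongrightarrow> NL) (at 0)" and D: "(Dd \<longlongrightarrow> DL) (at 0)" and DL: "DL \<noteq> 0"
    and eq: "\<And>t. t \<noteq> 0 \<Longrightarrow> Dd t \<noteq> 0 \<Longrightarrow> Phi t = C * t ^ m * (Nn t / Dd t)"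
  shows "Phi 0 = C * 0 ^ m * (NL / DL)"
proof -
  have ev: "eventually (\<lambda>t. Dd t \<noteq> 0) (at 0)" by (rule tendsto_imp_eventually_ne[OF D DL])
  have "eventually (\<lambda>t. C * t ^ m * (Nn t / Dd t) = Phi t) (at 0)"
    using ev ev_nz by eventually_elim (simp add: eq)
  moreover have "((\<lambda>t. C * t ^ m * (Nn t / Dd t)) \<longlongrightarrow> C * 0 ^ m * (NL / DL)) (at 0)"
    by (intro tendsto_intros N D DL)
  ultimately have "(Phi \<longlongrightarrow> C * 0 ^ m * (NL / DL)) (at 0)" by (simp add: tendsto_cong)
  moreover have "(Phi \<longlongrightarrow> Phi 0) (at 0)" using Pc by (simp add: isCont_def)
  ultimately show ?thesis using tendsto_unique[OF at_neq_bot] by metis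
qed

lemma odd_del_upd: "mat_delete (odd_symp_mat n \<mu> (x(0:=t)) z) 0 j = mat_delete (odd_symp_mat n \<mu> x z) 0 j"
  unfolding mat_delete_def odd_symp_mat_def by (rule eq_matI) auto

lemma even_del_upd: "mat_delete (even_symp_mat n \<mu> (x(0:=t))) 0 j = mat_delete (even_symp_mat n \<mu> x) 0 j"
  unfolding mat_delete_def even_symp_mat_def by (rule eq_matI) auto

lemma odd_del_00:
  assumes "n \<ge> 1"
  shows "mat_delete (odd_symp_mat n \<mu> x z) 0 0 = odd_symp_mat (n-1) (\<lambda>j. \<mu> (Suc j)) (\<lambda>i. x (Suc i)) z"
proof -
  obtain n' where n: "n = Suc n'" using assms by (cases n) auto
  show ?thesis unfolding n mat_delete_def odd_symp_mat_def by (rule eq_matI) auto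
qed

lemma even_del_00:
  assumes "n \<ge> 1"
  shows "mat_delete (even_symp_mat n \<mu> x) 0 0 = even_symp_mat (n-1) (\<lambda>j. \<mu> (Suc j)) (\<lambda>i. x (Suc i))"
proof -
  obtain n' where n: "n = Suc n'" using assms by (cases n) auto
  show ?thesis unfolding n mat_delete_def even_symp_mat_def by (rule eq_matI) auto
qed

lemma odd_row_limit:
  assumes n: "n \<ge> 1" and mu: "\<And>j. \<mu> j \<le> \<mu> 0"
  shows "((\<lambda>t. t ^ (\<mu> 0 + n + 1) * det (odd_symp_mat n \<mu> (x(0:=t)) z))
          \<longlongrightarrow> - det (odd_symp_mat (n-1) (\<lambda>j. \<mu> (Suc j)) (\<lambda>i. x (Suc i)) z)) (at 0)"
proof -
  define K where "K = \<mu> 0 + n + 1"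
  define e where "e = (\<lambda>j. \<mu> j + n - j)"
  define g where "g = (\<lambda>j (t::complex). t ^ (K + e j + 1) - t ^ (K - (e j + 1)) - inverse z * (t ^ (K + e j) - t ^ (K - e j)))"
  have eK: "e j + 1 \<le> K" for j using mu[of j] by (simp add: e_def K_def)
  have "((\<lambda>t. t ^ K * det (odd_symp_mat n \<mu> (x(0:=t)) z)) \<longlongrightarrow> - det (mat_delete (odd_symp_mat n \<mu> (x(0:=1)) z) 0 0)) (at 0)"
  proof (rule row0_limit[where g=g])
    show "\<And>t. odd_symp_mat n \<mu> (x(0 := t)) z \<in> carrier_mat (n+1) (n+1)" by (simp add: odd_symp_mat_def)
    show "0 < n + 1" by simp
    fix t :: complex and j assume t: "t \<noteq> 0" and j: "j < n + 1"
    have ex1: "\<mu> j + n + 1 - j = Suc (e j)" and ex2: "\<mu> j + n - j = e j" using j by (simp_all add: e_def)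
    have ent: "odd_symp_mat n \<mu> (x(0:=t)) z $$ (0,j) = (t ^ (\<mu> j + n + 1 - j) - inverse t ^ (\<mu> j + n + 1 - j)) - inverse z * (t ^ (\<mu> j + n - j) - inverse t ^ (\<mu> j + n - j))"
      using j n by (simp add: odd_symp_mat_def)
    have "t ^ K * odd_symp_mat n \<mu> (x(0:=t)) z $$ (0,j)
       = t ^ K * t ^ Suc (e j) - t ^ K * inverse t ^ Suc (e j) - inverse z * (t ^ K * t ^ e j - t ^ K * inverse t ^ e j)"
      unfolding ent ex1 ex2 by (simp add: algebra_simps)
    also have "\<dots> = g j t"
      unfolding g_def using pow_inv[OF t eK[of j]] pow_inv[OF t, of "e j" K] eK[of j]
      by (simp add: power_add[symmetric])
    finally show "t ^ K * odd_symp_mat n \<mu> (x(0:=t)) z $$ (0,j) = g j t" .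
  next
    fix j :: nat
    show "isCont (g j) 0" unfolding g_def by (intro continuous_intros)
  next
    fix j assume j: "j < n + 1"
    have "K - (e j + 1) = 0 \<longleftrightarrow> j = 0"
    proof
      assume "K - (e j + 1) = 0"
      then show "j = 0" using mu[of j] j by (cases j) (simp_all add: K_def e_def)
    qed (simp add: K_def e_def)
    moreover have "K - e j \<noteq> 0" using eK[of j] by simp
    ultimately show "g j 0 = (if j = 0 then -1 else 0)" by (simp add: g_def K_def power_0_left)
  next
    fix t j show "mat_delete (odd_symp_mat n \<mu> (x(0 := t)) z) 0 j = mat_delete (odd_symp_mat n \<mu> (x(0 := 1)) z) 0 j"
      by (simp add: odd_del_upd)
  qed
  moreover have "mat_delete (odd_symp_mat n \<mu> (x(0:=1)) z) 0 0 = odd_symp_mat (n-1) (\<lambda>j. \<mu> (Suc j)) (\<lambda>i. x (Suc i)) z"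
    using odd_del_00[OF n, of \<mu> "x(0:=1)" z] by simp
  ultimately show ?thesis by (simp add: K_def)
qed

lemma even_row_limit:
  assumes n: "n \<ge> 1" and mu: "\<And>j. \<mu> j \<le> \<mu> 0"
  shows "((\<lambda>t. t ^ (\<mu> 0 + n) * det (even_symp_mat n \<mu> (x(0:=t))))
          \<longlongrightarrow> - det (even_symp_mat (n-1) (\<lambda>j. \<mu> (Suc j)) (\<lambda>i. x (Suc i)))) (at 0)"
proof -
  define K where "K = \<mu> 0 + n"
  define e where "e = (\<lambda>j. \<mu> j + n - j)"
  define g where "g = (\<lambda>j (t::complex). t ^ (K + e j) - t ^ (K - e j))"
  have eK: "e j \<le> K" for j using mu[of j] by (simp add: e_def K_def)
  have "((\<lambda>t. t ^ K * det (even_symp_mat n \<mu> (x(0:=t)))) \<longlongrightarrow> - det (mat_delete (even_symp_mat n \<mu> (x(0:=1))) 0 0)) (at 0)"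
  proof (rule row0_limit[where g=g])
    show "\<And>t. even_symp_mat n \<mu> (x(0 := t)) \<in> carrier_mat n n" by (simp add: even_symp_mat_def)
    show "0 < n" using n by simp
    fix t :: complex and j assume t: "t \<noteq> 0" and j: "j < n"
    have "t ^ K * even_symp_mat n \<mu> (x(0:=t)) $$ (0,j) = t ^ K * t ^ e j - t ^ K * inverse t ^ e j"
      using j n by (simp add: even_symp_mat_def e_def algebra_simps)
    also have "\<dots> = g j t"
      unfolding g_def using pow_inv[OF t eK[of j]] by (simp add: power_add[symmetric])
    finally show "t ^ K * even_symp_mat n \<mu> (x(0:=t)) $$ (0,j) = g j t" .
  next
    fix j :: nat
    show "isCont (g j) 0" unfolding g_def by (intro continuous_intros)
  next
    fix j assume j: "j < n"
    have "K - e j = 0 \<longleftrightarrow> j = 0"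
    proof
      assume "K - e j = 0"
      then show "j = 0" using mu[of j] j by (cases j) (simp_all add: K_def e_def)
    qed (simp add: K_def e_def)
    moreover have "0 < K" using n by (simp add: K_def)
    ultimately show "g j 0 = (if j = 0 then -1 else 0)" by (simp add: g_def power_0_left)
  next
    fix t j show "mat_delete (even_symp_mat n \<mu> (x(0 := t))) 0 j = mat_delete (even_symp_mat n \<mu> (x(0 := 1))) 0 j"
      by (simp add: even_del_upd)
  qed
  moreover have "mat_delete (even_symp_mat n \<mu> (x(0:=1))) 0 0 = even_symp_mat (n-1) (\<lambda>j. \<mu> (Suc j)) (\<lambda>i. x (Suc i))"
    using even_del_00[OF n, of \<mu> "x(0:=1)"] by simp
  ultimately show ?thesis by (simp add: K_def)
qed




lemma prod_upd0:
  assumes "n \<ge> 1"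
  shows "(\<Prod>i<n. (x(0:=t)) i) = t * (\<Prod>i<n-1. x (Suc i))"
proof -
  obtain n' where n: "n = Suc n'" using assms by (cases n) auto
  show ?thesis unfolding n by (subst prod.lessThan_Suc_shift) simp
qed

lemma limit_algebra:
  fixes t C dl den :: complex
  assumes t: "t \<noteq> 0" and den: "den \<noteq> 0" and lr: "l \<le> r"
  shows "(t * C) ^ r * (dl / den) = C ^ r * t ^ (r - l) * ((t ^ (l + K) * dl) / (t ^ K * den))"
proof -
  have "t ^ r = t ^ (r - l) * t ^ l" using lr by (simp add: power_add[symmetric])
  moreover have "t ^ (l + K) = t ^ l * t ^ K" by (simp add: power_add)
  ultimately show ?thesis using t den by (simp add: power_mult_distrib field_simps)
qed

lemma odd_limit:
  assumes n: "n \<ge> 1" and lam: "\<And>j. lam j \<le> lam 0" and r: "lam 0 \<le> r" and z: "z \<noteq> 0"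
    and c: "is_mpoly n c"
    and hc: "\<forall>x. (\<forall>i<n. x i \<noteq> 0) \<and> odd_symp_den n x z \<noteq> 0 \<longrightarrow> (\<Prod>i<n. x i)^r * Symp_odd n lam x z = mpoly_eval n c x"
    and x0: "x 0 = 0" and xn: "\<forall>i. 1 \<le> i \<and> i < n \<longrightarrow> x i \<noteq> 0"
    and D': "odd_symp_den (n-1) (\<lambda>i. x (Suc i)) z \<noteq> 0"
  shows "mpoly_eval n c x = (if lam 0 = r then (\<Prod>i<n-1. x (Suc i))^r * Symp_odd (n-1) (\<lambda>j. lam (Suc j)) (\<lambda>i. x (Suc i)) z else 0)"
proof -
  define Phi where "Phi = (\<lambda>t. poly (upoly n c x 0) t)"
  have Phi_eq: "Phi t = mpoly_eval n c (x(0:=t))" for t unfolding Phi_def using poly_upoly[of 0 n c x t] n by simp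
  have Pc: "isCont Phi 0" unfolding Phi_def by simp
  define N' where "N' = det (odd_symp_mat (n-1) (\<lambda>j. lam (Suc j)) (\<lambda>i. x (Suc i)) z)"
  define D'' where "D'' = odd_symp_den (n-1) (\<lambda>i. x (Suc i)) z"
  define C where "C = (\<Prod>i<n-1. x (Suc i))"
  define Nn where "Nn = (\<lambda>t. t ^ (lam 0 + (n + 1)) * det (odd_symp_mat n lam (x(0:=t)) z))"
  define Dd where "Dd = (\<lambda>t. t ^ (n + 1) * odd_symp_den n (x(0:=t)) z)"
  have limN: "(Nn \<longlongrightarrow> - N') (at 0)"
    using odd_row_limit[where \<mu>=lam and x=x and z=z, OF n lam] unfolding Nn_def N'_def by (simp add: add.assoc)
  have limD: "(Dd \<longlongrightarrow> - D'') (at 0)"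
    using odd_row_limit[OF n, of "\<lambda>_. 0" x z] unfolding Dd_def D''_def odd_symp_den_def by simp
  have eq: "Phi t = C ^ r * t ^ (r - lam 0) * (Nn t / Dd t)" if t: "t \<noteq> 0" and Dt: "Dd t \<noteq> 0" for t
  proof -
    have den: "odd_symp_den n (x(0:=t)) z \<noteq> 0" using Dt by (simp add: Dd_def)
    have nz: "\<forall>i<n. (x(0:=t)) i \<noteq> 0" using t xn by auto
    have hh: "(\<Prod>i<n. (x(0:=t)) i)^r * Symp_odd n lam (x(0:=t)) z = mpoly_eval n c (x(0:=t))"
      using hc nz den by blast
    have "Phi t = (\<Prod>i<n. (x(0:=t)) i)^r * Symp_odd n lam (x(0:=t)) z"
      by (simp only: Phi_eq hh)
    also have "\<dots> = (t * C) ^ r * (det (odd_symp_mat n lam (x(0:=t)) z) / odd_symp_den n (x(0:=t)) z)"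
      unfolding prod_upd0[OF n] C_def Symp_odd_def ..
    also have "\<dots> = C ^ r * t ^ (r - lam 0) * (Nn t / Dd t)"
      unfolding Nn_def Dd_def by (rule limit_algebra[OF t den r])
    finally show ?thesis .
  qed
  have "Phi 0 = C ^ r * 0 ^ (r - lam 0) * (- N' / - D'')"
    by (rule limit_core[OF Pc limN limD _ eq]) (use D' in \<open>simp_all add: D''_def\<close>)
  moreover have "Phi 0 = mpoly_eval n c x" using x0 by (simp add: Phi_eq fun_upd_idem)
  moreover have "(0::complex) ^ (r - lam 0) = (if lam 0 = r then 1 else 0)" using r by (simp add: power_0_left)
  ultimately show ?thesis by (simp add: Symp_odd_def N'_def D''_def C_def)
qed

lemma even_limit:
  assumes n: "n \<ge> 1" and lam: "\<And>j. lam j \<le> lam 0" and r: "lam 0 \<le> r"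
    and c: "is_mpoly n c"
    and hc: "\<forall>x. (\<forall>i<n. x i \<noteq> 0) \<and> even_symp_den n x \<noteq> 0 \<longrightarrow> (\<Prod>i<n. x i)^r * Symp_even n lam x = mpoly_eval n c x"
    and x0: "x 0 = 0" and xn: "\<forall>i. 1 \<le> i \<and> i < n \<longrightarrow> x i \<noteq> 0"
    and D': "even_symp_den (n-1) (\<lambda>i. x (Suc i)) \<noteq> 0"
  shows "mpoly_eval n c x = (if lam 0 = r then (\<Prod>i<n-1. x (Suc i))^r * Symp_even (n-1) (\<lambda>j. lam (Suc j)) (\<lambda>i. x (Suc i)) else 0)"
proof -
  define Phi where "Phi = (\<lambda>t. poly (upoly n c x 0) t)"
  have Phi_eq: "Phi t = mpoly_eval n c (x(0:=t))" for t unfolding Phi_def using poly_upoly[of 0 n c x t] n by simp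
  have Pc: "isCont Phi 0" unfolding Phi_def by simp
  define N' where "N' = det (even_symp_mat (n-1) (\<lambda>j. lam (Suc j)) (\<lambda>i. x (Suc i)))"
  define D'' where "D'' = even_symp_den (n-1) (\<lambda>i. x (Suc i))"
  define C where "C = (\<Prod>i<n-1. x (Suc i))"
  define Nn where "Nn = (\<lambda>t. t ^ (lam 0 + n) * det (even_symp_mat n lam (x(0:=t))))"
  define Dd where "Dd = (\<lambda>t. t ^ n * even_symp_den n (x(0:=t)))"
  have limN: "(Nn \<longlongrightarrow> - N') (at 0)"
    using even_row_limit[where \<mu>=lam and x=x, OF n lam] unfolding Nn_def N'_def by simp
  have limD: "(Dd \<longlongrightarrow> - D'') (at 0)"
    using even_row_limit[OF n, of "\<lambda>_. 0" x] unfolding Dd_def D''_def even_symp_den_def by simp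
  have eq: "Phi t = C ^ r * t ^ (r - lam 0) * (Nn t / Dd t)" if t: "t \<noteq> 0" and Dt: "Dd t \<noteq> 0" for t
  proof -
    have den: "even_symp_den n (x(0:=t)) \<noteq> 0" using Dt by (simp add: Dd_def)
    have nz: "\<forall>i<n. (x(0:=t)) i \<noteq> 0" using t xn by auto
    have hh: "(\<Prod>i<n. (x(0:=t)) i)^r * Symp_even n lam (x(0:=t)) = mpoly_eval n c (x(0:=t))"
      using hc nz den by blast
    have "Phi t = (\<Prod>i<n. (x(0:=t)) i)^r * Symp_even n lam (x(0:=t))"
      by (simp only: Phi_eq hh)
    also have "\<dots> = (t * C) ^ r * (det (even_symp_mat n lam (x(0:=t))) / even_symp_den n (x(0:=t)))"
      unfolding prod_upd0[OF n] C_def Symp_even_def ..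
    also have "\<dots> = C ^ r * t ^ (r - lam 0) * (Nn t / Dd t)"
      unfolding Nn_def Dd_def by (rule limit_algebra[OF t den r])
    finally show ?thesis .
  qed
  have "Phi 0 = C ^ r * 0 ^ (r - lam 0) * (- N' / - D'')"
    by (rule limit_core[OF Pc limN limD _ eq]) (use D' in \<open>simp_all add: D''_def\<close>)
  moreover have "Phi 0 = mpoly_eval n c x" using x0 by (simp add: Phi_eq fun_upd_idem)
  moreover have "(0::complex) ^ (r - lam 0) = (if lam 0 = r then 1 else 0)" using r by (simp add: power_0_left)
  ultimately show ?thesis by (simp add: Symp_even_def N'_def D''_def C_def)
qed

theorem mainTheorem1:
  fixes n r :: nat
  assumes "n \<ge> 1"
  shows
  "(\<forall>(lam :: nat \<Rightarrow> nat) (z :: complex).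
      is_partition lam (n+1) \<and> lam 0 \<le> r \<and> z \<noteq> 0 \<longrightarrow>
      (\<exists>c. is_mpoly n c \<and>
         (\<forall>x. (\<forall>i<n. x i \<noteq> 0) \<and> odd_symp_den n x z \<noteq> 0 \<longrightarrow>
              (\<Prod>i<n. x i) ^ r * Symp_odd n lam x z = mpoly_eval n c x) \<and>
         (\<forall>x. x 0 = 0 \<and> (\<forall>i. 1 \<le> i \<and> i < n \<longrightarrow> x i \<noteq> 0)
                \<and> odd_symp_den (n-1) (\<lambda>i. x (Suc i)) z \<noteq> 0 \<longrightarrow>
              mpoly_eval n c x =
                (if lam 0 = r
                 then (\<Prod>i<n-1. x (Suc i)) ^ r
                        * Symp_odd (n-1) (\<lambda>j. lam (Suc j)) (\<lambda>i. x (Suc i)) z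
                 else 0))))
   \<and>
   (\<forall>(lam :: nat \<Rightarrow> nat).
      is_partition lam n \<and> lam 0 \<le> r \<longrightarrow>
      (\<exists>c. is_mpoly n c \<and>
         (\<forall>x. (\<forall>i<n. x i \<noteq> 0) \<and> even_symp_den n x \<noteq> 0 \<longrightarrow>
              (\<Prod>i<n. x i) ^ r * Symp_even n lam x = mpoly_eval n c x) \<and>
         (\<forall>x. x 0 = 0 \<and> (\<forall>i. 1 \<le> i \<and> i < n \<longrightarrow> x i \<noteq> 0)
                \<and> even_symp_den (n-1) (\<lambda>i. x (Suc i)) \<noteq> 0 \<longrightarrow>
              mpoly_eval n c x =
                (if lam 0 = r
                 then (\<Prod>i<n-1. x (Suc i)) ^ r
                        * Symp_even (n-1) (\<lambda>j. lam (Suc j)) (\<lambda>i. x (Suc i))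
                 else 0))))"
proof (intro conjI allI impI)
  fix lam :: "nat \<Rightarrow> nat" and z :: complex
  assume h: "is_partition lam (n+1) \<and> lam 0 \<le> r \<and> z \<noteq> 0"
  have lam: "\<And>j. lam j \<le> lam 0" using h by (simp add: is_partition_def)
  obtain c where c: "is_mpoly n c" "\<forall>x. (\<forall>i<n. x i \<noteq> 0) \<and> odd_symp_den n x z \<noteq> 0 \<longrightarrow>
            (\<Prod>i<n. x i) ^ r * Symp_odd n lam x z = mpoly_eval n c x"
    using odd_poly[where lam=lam and r=r and z=z and n=n, OF lam] h by blast
  show "\<exists>c. is_mpoly n c \<and>
         (\<forall>x. (\<forall>i<n. x i \<noteq> 0) \<and> odd_symp_den n x z \<noteq> 0 \<longrightarrow>
              (\<Prod>i<n. x i) ^ r * Symp_odd n lam x z = mpoly_eval n c x) \<and>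
         (\<forall>x. x 0 = 0 \<and> (\<forall>i. 1 \<le> i \<and> i < n \<longrightarrow> x i \<noteq> 0)
                \<and> odd_symp_den (n-1) (\<lambda>i. x (Suc i)) z \<noteq> 0 \<longrightarrow>
              mpoly_eval n c x =
                (if lam 0 = r
                 then (\<Prod>i<n-1. x (Suc i)) ^ r
                        * Symp_odd (n-1) (\<lambda>j. lam (Suc j)) (\<lambda>i. x (Suc i)) z
                 else 0))"
    using c odd_limit[where lam=lam, OF assms lam _ _ c(1) c(2)] h by blast
next
  fix lam :: "nat \<Rightarrow> nat"
  assume h: "is_partition lam n \<and> lam 0 \<le> r"
  have lam: "\<And>j. lam j \<le> lam 0" using h by (simp add: is_partition_def)
  obtain c where c: "is_mpoly n c" "\<forall>x. (\<forall>i<n. x i \<noteq> 0) \<and> even_symp_den n x \<noteq> 0 \<longrightarrow>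
            (\<Prod>i<n. x i) ^ r * Symp_even n lam x = mpoly_eval n c x"
    using even_poly[where lam=lam and r=r, OF assms lam] h by blast
  show "\<exists>c. is_mpoly n c \<and>
         (\<forall>x. (\<forall>i<n. x i \<noteq> 0) \<and> even_symp_den n x \<noteq> 0 \<longrightarrow>
              (\<Prod>i<n. x i) ^ r * Symp_even n lam x = mpoly_eval n c x) \<and>
         (\<forall>x. x 0 = 0 \<and> (\<forall>i. 1 \<le> i \<and> i < n \<longrightarrow> x i \<noteq> 0)
                \<and> even_symp_den (n-1) (\<lambda>i. x (Suc i)) \<noteq> 0 \<longrightarrow>
              mpoly_eval n c x =
                (if lam 0 = r
                 then (\<Prod>i<n-1. x (Suc i)) ^ r
                        * Symp_even (n-1) (\<lambda>j. lam (Suc j)) (\<lambda>i. x (Suc i))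
                 else 0))"
    using c even_limit[where lam=lam, OF assms lam _ c(1) c(2)] h by blast
qed


end
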